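(* Let $F:\mathcal{P}(V,A)\to S_2(A)$ be a consular election rule satisfying SPP and SPO. Let $P$ be a profile with $F(P)=\{a,b\}$, let $i$ be a voter, $s\in A$, and let $P_i'$ be the linear order obtained from $P_i$ by moving $s$ up some number of positions (the relative order of the other alternatives unchanged). If $s\in\{a,b\}$, then $F(P_i'P_{-i})=F(P)$. If $s\notin\{a,b\}$, then either $F(P_i'P_{-i})=F(P)$, or $F(P_i'P_{-i})=(\{a,b\}\setminus\{x\})\cup\{s\}$ for some $x\in\{a,b\}$; and the latter happens only if $s$ overtakes $x$, i.e. $x\succ_i s$ in $P_i$ and $s\succ_i' x$ in $P_i'$.
   Context: $V$ is a finite nonempty set of voters, $A$ a finite set of alternatives; a profile $P$ assigns to each voter $i$ a linear order $P_i$ on $A$; $P_i'P_{-i}$ replaces voter $i$'s order by $P_i'$. $S_2(A)$ is the set of 2-element subsets of $A$; a consular election rule is a map $F:\mathcal{P}(V,A)\to S_2(A)$. SPO: for all $P$, $i$, $P_i'$, $\mathrm{best}(P_i,F(P))\succeq_i\mathrm{best}(P_i,F(P_i'P_{-i}))$; SPP: same with $\mathrm{worst}$, where $\mathrm{best}(P_i,W)$, $\mathrm{worst}(P_i,W)$ are the $P_i$-best and $P_i$-worst elements of $W$. *)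

theory Defs
  imports Main
begin

text \<open>A preference is a relation R on A; (x,y) \<in> R means x is weakly preferred to y
  (i.e. x = y or x is ranked above y). A linear order is Order_Relation.linear_order_on A R.\<close>

definition profile :: "'v set \<Rightarrow> 'a set \<Rightarrow> ('v \<Rightarrow> 'a rel) \<Rightarrow> bool" where
  "profile V A P \<longleftrightarrow> (\<forall>i\<in>V. linear_order_on A (P i)) \<and> (\<forall>i. i \<notin> V \<longrightarrow> P i = {})"

definition consular_rule :: "'v set \<Rightarrow> 'a set \<Rightarrow> (('v \<Rightarrow> 'a rel) \<Rightarrow> 'a set) \<Rightarrow> bool" where
  "consular_rule V A F \<longleftrightarrow> (\<forall>P. profile V A P \<longrightarrow> F P \<subseteq> A \<and> card (F P) = 2)"

definition best :: "'a rel \<Rightarrow> 'a set \<Rightarrow> 'a" where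
  "best R W = (THE x. x \<in> W \<and> (\<forall>y\<in>W. (x, y) \<in> R))"

definition worst :: "'a rel \<Rightarrow> 'a set \<Rightarrow> 'a" where
  "worst R W = (THE x. x \<in> W \<and> (\<forall>y\<in>W. (y, x) \<in> R))"

definition SPO :: "'v set \<Rightarrow> 'a set \<Rightarrow> (('v \<Rightarrow> 'a rel) \<Rightarrow> 'a set) \<Rightarrow> bool" where
  "SPO V A F \<longleftrightarrow> (\<forall>P i R'. profile V A P \<longrightarrow> i \<in> V \<longrightarrow> linear_order_on A R' \<longrightarrow>
      (best (P i) (F P), best (P i) (F (P(i := R')))) \<in> P i)"

definition SPP :: "'v set \<Rightarrow> 'a set \<Rightarrow> (('v \<Rightarrow> 'a rel) \<Rightarrow> 'a set) \<Rightarrow> bool" where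
  "SPP V A F \<longleftrightarrow> (\<forall>P i R'. profile V A P \<longrightarrow> i \<in> V \<longrightarrow> linear_order_on A R' \<longrightarrow>
      (worst (P i) (F P), worst (P i) (F (P(i := R')))) \<in> P i)"

definition moves_up :: "'a set \<Rightarrow> 'a \<Rightarrow> 'a rel \<Rightarrow> 'a rel \<Rightarrow> bool" where
  "moves_up A s R R' \<longleftrightarrow> linear_order_on A R' \<and>
     (\<forall>x\<in>A. \<forall>y\<in>A. x \<noteq> s \<longrightarrow> y \<noteq> s \<longrightarrow> ((x, y) \<in> R' \<longleftrightarrow> (x, y) \<in> R)) \<and>
     (\<forall>x\<in>A. (s, x) \<in> R \<longrightarrow> (s, x) \<in> R')"

end

theory Submission imports Defs begin

lemma lin_D:
  assumes "linear_order_on A R"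
  shows "R \<subseteq> A \<times> A" "\<And>x. x \<in> A \<Longrightarrow> (x,x) \<in> R" "trans R" "antisym R"
    "\<And>x y. x \<in> A \<Longrightarrow> y \<in> A \<Longrightarrow> x \<noteq> y \<Longrightarrow> (x,y) \<in> R \<or> (y,x) \<in> R"
  using assms unfolding linear_order_on_def partial_order_on_def preorder_on_def refl_on_def total_on_def
  by auto

lemma best2:
  assumes "linear_order_on A R" "x \<in> A" "y \<in> A" "x \<noteq> y"
  shows "best R {x,y} = (if (x,y) \<in> R then x else y)"
proof -
  note L = lin_D[OF assms(1)]
  show ?thesis
  proof (cases "(x,y) \<in> R")
    case True
    have "best R {x,y} = x" unfolding best_def
      by (rule the_equality) (use True L assms in \<open>auto dest: antisymD\<close>)
    then show ?thesis using True by simp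
  next
    case False
    then have "(y,x) \<in> R" using L assms by blast
    have "best R {x,y} = y" unfolding best_def
      by (rule the_equality) (use False \<open>(y,x) \<in> R\<close> L assms in \<open>auto\<close>)
    then show ?thesis using False by simp
  qed
qed

lemma worst2:
  assumes "linear_order_on A R" "x \<in> A" "y \<in> A" "x \<noteq> y"
  shows "worst R {x,y} = (if (x,y) \<in> R then y else x)"
proof -
  note L = lin_D[OF assms(1)]
  show ?thesis
  proof (cases "(x,y) \<in> R")
    case True
    have "worst R {x,y} = y" unfolding worst_def
      by (rule the_equality) (use True L assms in \<open>auto dest: antisymD\<close>)
    then show ?thesis using True by simp
  next
    case False
    then have "(y,x) \<in> R" using L assms by blast
    have "worst R {x,y} = x" unfolding worst_def
      by (rule the_equality) (use False \<open>(y,x) \<in> R\<close> L assms in \<open>auto\<close>)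
    then show ?thesis using False by simp
  qed
qed

lemma one_step_core:
  assumes L: "linear_order_on A R" and L': "linear_order_on A R'"
    and s: "s \<in> A" and y: "y \<in> A" "s \<noteq> y" "(y,s) \<in> R"
    and agree: "\<And>u v. u \<in> A \<Longrightarrow> v \<in> A \<Longrightarrow> \<not> ((u = s \<and> v = y) \<or> (u = y \<and> v = s)) \<Longrightarrow> ((u,v) \<in> R \<longleftrightarrow> (u,v) \<in> R')"
    and ab: "a \<in> A" "b \<in> A" "a \<noteq> b" and cd: "c \<in> A" "d \<in> A" "c \<noteq> d"
    and i1: "(best R {a,b}, best R {c,d}) \<in> R"
    and i2: "(worst R {a,b}, worst R {c,d}) \<in> R"
    and i3: "(best R' {c,d}, best R' {a,b}) \<in> R'"
    and i4: "(worst R' {c,d}, worst R' {a,b}) \<in> R'"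
  shows "(c = a \<and> d = b) \<or> (c = b \<and> d = a) \<or> (s \<noteq> a \<and> s \<noteq> b \<and> (s,y) \<in> R' \<and>
     ((y = a \<and> ((c = s \<and> d = b) \<or> (c = b \<and> d = s))) \<or> (y = b \<and> ((c = s \<and> d = a) \<or> (c = a \<and> d = s)))))"
proof -
  note R = lin_D[OF L] and R' = lin_D[OF L']
  have tR: "(u,w) \<in> R" if "(u,v) \<in> R" "(v,w) \<in> R" for u v w using R(3) that by (meson transD)
  have tR': "(u,w) \<in> R'" if "(u,v) \<in> R'" "(v,w) \<in> R'" for u v w using R'(3) that by (meson transD)
  have aR: "u = v" if "(u,v) \<in> R" "(v,u) \<in> R" for u v using R(4) that by (meson antisymD)
  have aR': "u = v" if "(u,v) \<in> R'" "(v,u) \<in> R'" for u v using R'(4) that by (meson antisymD)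
  note b1 = best2[OF L ab] best2[OF L cd] best2[OF L' ab] best2[OF L' cd]
  note w1 = worst2[OF L ab] worst2[OF L cd] worst2[OF L' ab] worst2[OF L' cd]
  show ?thesis
    using i1 i2 i3 i4 unfolding b1 w1
    using tR tR' aR aR' R(5) R'(5) agree ab cd s y R(2) R'(2)
    by (smt (verit))
qed


lemma profile_upd:
  assumes "profile V A P" "i \<in> V" "linear_order_on A R'"
  shows "profile V A (P(i := R'))"
  using assms unfolding profile_def by auto

lemma one_step:
  assumes CR: "consular_rule V A F" and SPP: "SPP V A F" and SPO: "SPO V A F"
    and P: "profile V A P" and i: "i \<in> V" and L': "linear_order_on A R'"
    and s: "s \<in> A" and y: "y \<in> A" "s \<noteq> y" "(y,s) \<in> P i"
    and agree: "\<And>u v. u \<in> A \<Longrightarrow> v \<in> A \<Longrightarrow> \<not> ((u = s \<and> v = y) \<or> (u = y \<and> v = s)) \<Longrightarrow> ((u,v) \<in> P i \<longleftrightarrow> (u,v) \<in> R')"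
  shows "F (P(i := R')) = F P \<or> (s \<notin> F P \<and> y \<in> F P \<and> (s,y) \<in> R' \<and> F (P(i := R')) = F P - {y} \<union> {s})"
proof -
  define Q where "Q = P(i := R')"
  have Q: "profile V A Q" unfolding Q_def by (rule profile_upd[OF P i L'])
  have L: "linear_order_on A (P i)" using P i unfolding profile_def by auto
  have QP: "Q(i := P i) = P" unfolding Q_def by simp
  have Qi: "Q i = R'" unfolding Q_def by simp
  have FP: "F P \<subseteq> A" "card (F P) = 2" using CR P unfolding consular_rule_def by auto
  have FQ: "F Q \<subseteq> A" "card (F Q) = 2" using CR Q unfolding consular_rule_def by auto
  obtain a b where ab: "F P = {a,b}" "a \<noteq> b" using FP(2) by (auto simp: card_2_iff)
  obtain c d where cd: "F Q = {c,d}" "c \<noteq> d" using FQ(2) by (auto simp: card_2_iff)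
  have abA: "a \<in> A" "b \<in> A" using ab FP by auto
  have cdA: "c \<in> A" "d \<in> A" using cd FQ by auto
  have i1: "(best (P i) {a,b}, best (P i) {c,d}) \<in> P i"
    using SPO P i L' unfolding SPO_def ab(1)[symmetric] cd(1)[symmetric] Q_def by blast
  have i2: "(worst (P i) {a,b}, worst (P i) {c,d}) \<in> P i"
    using SPP P i L' unfolding SPP_def ab(1)[symmetric] cd(1)[symmetric] Q_def by blast
  have i3: "(best R' {c,d}, best R' {a,b}) \<in> R'"
    using SPO Q i L unfolding SPO_def ab(1)[symmetric] cd(1)[symmetric] by (metis QP Qi)
  have i4: "(worst R' {c,d}, worst R' {a,b}) \<in> R'"
    using SPP Q i L unfolding SPP_def ab(1)[symmetric] cd(1)[symmetric] by (metis QP Qi)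
  have core: "(c = a \<and> d = b) \<or> (c = b \<and> d = a) \<or> (s \<noteq> a \<and> s \<noteq> b \<and> (s,y) \<in> R' \<and>
     ((y = a \<and> ((c = s \<and> d = b) \<or> (c = b \<and> d = s))) \<or> (y = b \<and> ((c = s \<and> d = a) \<or> (c = a \<and> d = s)))))"
    by (rule one_step_core[OF L L' s y agree abA ab(2) cdA cd(2) i1 i2 i3 i4])
  then show ?thesis unfolding Q_def[symmetric] cd(1) ab(1) using ab(2) cd(2) by auto
qed


lemma ex_max:
  assumes L: "linear_order_on A R" and "finite Ov" "Ov \<noteq> {}" "Ov \<subseteq> A"
  shows "\<exists>y\<in>Ov. \<forall>z\<in>Ov. (y,z) \<in> R"
  using assms(2-4)
proof (induction Ov rule: finite_ne_induct)
  case (singleton x) then show ?case using lin_D(2)[OF L] by auto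
next
  case (insert x F)
  then obtain y where y: "y \<in> F" "\<forall>z\<in>F. (y,z) \<in> R" by auto
  show ?case
  proof (cases "(y,x) \<in> R")
    case True then show ?thesis using y by auto
  next
    case False
    then have "(x,y) \<in> R" using lin_D(5)[OF L, of x y] lin_D(2)[OF L, of x] insert y by auto
    then show ?thesis using y lin_D(3)[OF L] lin_D(2)[OF L, of x] insert by (auto dest: transD)
  qed
qed

lemma main_claim:
  assumes CR: "consular_rule V A F" and SPP: "SPP V A F" and SPO: "SPO V A F"
    and P: "profile V A P" and i: "i \<in> V" and s: "s \<in> A" and fin: "finite A"
  shows "moves_up A s (P i) R' \<Longrightarrow> card {x\<in>A. x \<noteq> s \<and> (x,s) \<in> P i \<and> (s,x) \<in> R'} = n \<Longrightarrow>
    F (P(i := R')) = F P \<or> (s \<notin> F P \<and> (\<exists>x\<in>F P. F (P(i := R')) = F P - {x} \<union> {s} \<and> (x,s) \<in> P i \<and> (s,x) \<in> R'))"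
proof (induction n arbitrary: R' rule: less_induct)
  case (less n)
  define R where "R = P i"
  have L: "linear_order_on A R" using P i unfolding profile_def R_def by auto
  have L': "linear_order_on A R'" using less.prems unfolding moves_up_def by auto
  note LR = lin_D[OF L] and LR' = lin_D[OF L']
  have mv1: "\<And>x y. x \<in> A \<Longrightarrow> y \<in> A \<Longrightarrow> x \<noteq> s \<Longrightarrow> y \<noteq> s \<Longrightarrow> ((x, y) \<in> R' \<longleftrightarrow> (x, y) \<in> R)"
    and mv2: "\<And>x. x \<in> A \<Longrightarrow> (s, x) \<in> R \<Longrightarrow> (s, x) \<in> R'"
    using less.prems(1) unfolding moves_up_def R_def by auto
  define Ov where "Ov = {x\<in>A. x \<noteq> s \<and> (x,s) \<in> R \<and> (s,x) \<in> R'}"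
  have finO: "finite Ov" using fin unfolding Ov_def by auto
  have FP: "F P \<subseteq> A" "card (F P) = 2" using CR P unfolding consular_rule_def by auto
  show ?case
  proof (cases "Ov = {}")
    case True
    have agreeAll: "(u,v) \<in> R \<longleftrightarrow> (u,v) \<in> R'" if "u \<in> A" "v \<in> A" for u v
    proof (cases "u = s \<or> v = s")
      case False then show ?thesis using mv1 that by auto
    next
      case True
      have nO: "\<And>x. x \<in> A \<Longrightarrow> x \<noteq> s \<Longrightarrow> (x,s) \<in> R \<Longrightarrow> (s,x) \<in> R' \<Longrightarrow> False"
        using \<open>Ov = {}\<close> unfolding Ov_def by blast
      have aR': "\<And>p q. (p,q) \<in> R' \<Longrightarrow> (q,p) \<in> R' \<Longrightarrow> p = q" using LR'(4) by (meson antisymD)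
      show ?thesis
      proof (cases "u = v")
        case True then show ?thesis using LR(2) LR'(2) that by auto
      next
        case uv: False
        show ?thesis
        proof (cases "u = s")
          case True
          then show ?thesis using uv that mv2 nO LR(5)[of u v] by blast
        next
          case False
          then have vs: "v = s" using \<open>u = s \<or> v = s\<close> by simp
          show ?thesis using uv that mv2 nO LR(5)[of u v] LR'(5)[of u v] aR' vs by blast
        qed
      qed
    qed
    obtain y where y: "y \<in> F P" "y \<noteq> s" using FP(2)
      by (metis card_2_iff insert_iff)
    have yA: "y \<in> A" using y FP by auto
    show ?thesis
    proof (cases "(y,s) \<in> R")
      case True
      have "F (P(i := R')) = F P \<or> (s \<notin> F P \<and> y \<in> F P \<and> (s,y) \<in> R' \<and> F (P(i := R')) = F P - {y} \<union> {s})"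
        by (rule one_step[OF CR SPP SPO P i L' s yA y(2)[symmetric]])
          (use True agreeAll in \<open>auto simp: R_def\<close>)
      then show ?thesis using True unfolding R_def by blast
    next
      case False
      then have sy: "(s,y) \<in> R" using LR(5)[OF s yA] y by auto
      have "F (P(i := R')) = F P \<or> (y \<notin> F P \<and> s \<in> F P \<and> (y,s) \<in> R' \<and> F (P(i := R')) = F P - {s} \<union> {y})"
        by (rule one_step[OF CR SPP SPO P i L' yA s y(2)])
          (use sy agreeAll in \<open>auto simp: R_def\<close>)
      then show ?thesis using y by blast
    qed
  next
    case False
    obtain y where y: "y \<in> Ov" "\<forall>z\<in>Ov. (y,z) \<in> R"
      using ex_max[OF L finO False] unfolding Ov_def by auto
    have yA: "y \<in> A" "y \<noteq> s" "(y,s) \<in> R" "(s,y) \<in> R'" using y(1) unfolding Ov_def by auto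
    have adj: "z = s \<or> z = y" if "z \<in> A" "(s,z) \<in> R'" "(z,y) \<in> R'" for z
    proof (rule ccontr)
      assume nz: "\<not> (z = s \<or> z = y)"
      have zy: "(z,y) \<in> R" using mv1 that nz yA by auto
      have "(z,s) \<in> R" using zy yA LR(3) by (meson transD)
      then have "z \<in> Ov" using that nz unfolding Ov_def by auto
      then have "(y,z) \<in> R'" using mv1[of y z] nz yA that y(2) by auto
      then show False using that(3) LR'(4) nz by (meson antisymD)
    qed
    define R1 where "R1 = {(u,v). u \<in> A \<and> v \<in> A \<and> (if u = s \<and> v = y then False else if u = y \<and> v = s then True else (u,v) \<in> R')}"
    have L1: "linear_order_on A R1"
    proof -
      have sub: "R1 \<subseteq> A \<times> A" unfolding R1_def by auto
      have rf: "refl_on A R1" unfolding refl_on_def R1_def using LR'(2) yA by auto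
      have tr: "trans R1"
      proof (rule transI)
        fix u v w assume uv: "(u,v) \<in> R1" and vw: "(v,w) \<in> R1"
        have A3: "u \<in> A" "v \<in> A" "w \<in> A" using uv vw unfolding R1_def by auto
        have t': "\<And>p q r. (p,q) \<in> R' \<Longrightarrow> (q,r) \<in> R' \<Longrightarrow> (p,r) \<in> R'" using LR'(3) by (meson transD)
        have a': "\<And>p q. (p,q) \<in> R' \<Longrightarrow> (q,p) \<in> R' \<Longrightarrow> p = q" using LR'(4) by (meson antisymD)
        have mem: "\<And>p q. (p,q) \<in> R1 \<longleftrightarrow> p \<in> A \<and> q \<in> A \<and> \<not> (p = s \<and> q = y) \<and> ((p = y \<and> q = s) \<or> (p,q) \<in> R')"
          unfolding R1_def by auto
        have uv': "\<not> (u = s \<and> v = y)" "(u = y \<and> v = s) \<or> (u,v) \<in> R'" using uv mem by blast+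
        have vw': "\<not> (v = s \<and> w = y)" "(v = y \<and> w = s) \<or> (v,w) \<in> R'" using vw mem by blast+
        show "(u,w) \<in> R1"
        proof (cases "u = y \<and> v = s")
          case True
          show ?thesis
          proof (cases "w = s")
            case True then show ?thesis using \<open>u = y \<and> v = s\<close> mem A3 yA by auto
          next
            case ws: False
            then have sw: "(s,w) \<in> R'" "w \<noteq> y" using vw' True by auto
            have "(y,w) \<in> R'"
            proof (rule ccontr)
              assume "(y,w) \<notin> R'"
              then have "(w,y) \<in> R'" using LR'(5)[of y w] A3 yA sw by auto
              then show False using adj[of w] A3 sw ws by auto
            qed
            then show ?thesis using True mem A3 yA sw by auto
          qed
        next
          case uvF: False
          then have uvR: "(u,v) \<in> R'" using uv' by auto
          show ?thesis
          proof (cases "v = y \<and> w = s")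
            case True
            then have us: "u \<noteq> s" using uv' by auto
            show ?thesis
            proof (cases "u = y")
              case True then show ?thesis using \<open>v = y \<and> w = s\<close> mem A3 yA by auto
            next
              case uy: False
              have "(u,s) \<in> R'"
              proof (rule ccontr)
                assume "(u,s) \<notin> R'"
                then have "(s,u) \<in> R'" using LR'(5)[of u s] A3 us s by auto
                then show False using adj[of u] A3 uvR True us uy by auto
              qed
              then show ?thesis using True mem A3 us by auto
            qed
          next
            case vwF: False
            then have vwR: "(v,w) \<in> R'" using vw' by auto
            have uwR: "(u,w) \<in> R'" using t'[OF uvR vwR] .
            have "\<not> (u = s \<and> w = y)"
            proof
              assume "u = s \<and> w = y"
              then have "v = s \<or> v = y" using adj[of v] A3 uvR vwR by auto
              then show False using uv' vw' \<open>u = s \<and> w = y\<close> by auto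
            qed
            then show ?thesis using uwR mem A3 by auto
          qed
        qed
      qed
      have an: "antisym R1" unfolding R1_def antisym_def using LR'(4) by (auto dest: antisymD)
      have to: "total_on A R1" unfolding R1_def total_on_def using LR'(5) by auto
      show ?thesis unfolding linear_order_on_def partial_order_on_def preorder_on_def
        using sub rf tr an to by auto
    qed
    have mv1': "moves_up A s (P i) R1"
      unfolding moves_up_def R_def[symmetric]
    proof (intro conjI L1 ballI impI)
      fix x z assume "x \<in> A" "z \<in> A" "x \<noteq> s" "z \<noteq> s"
      then show "(x, z) \<in> R1 \<longleftrightarrow> (x, z) \<in> R" using mv1 yA unfolding R1_def by auto
    next
      fix x assume "x \<in> A" "(s,x) \<in> R"
      moreover have "x \<noteq> y" using calculation yA LR(4) by (metis antisymD)
      ultimately show "(s,x) \<in> R1" using mv2 s unfolding R1_def by auto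
    qed
    have O1: "{x\<in>A. x \<noteq> s \<and> (x,s) \<in> P i \<and> (s,x) \<in> R1} = Ov - {y}"
      unfolding Ov_def R1_def R_def using yA s by auto
    have lt: "card (Ov - {y}) < n"
      using less.prems(2) finO y(1) unfolding Ov_def[symmetric] R_def[symmetric]
      by (metis card_Diff1_less)
    have IH: "F (P(i := R1)) = F P \<or> (s \<notin> F P \<and> (\<exists>x\<in>F P. F (P(i := R1)) = F P - {x} \<union> {s} \<and> (x,s) \<in> P i \<and> (s,x) \<in> R1))"
      by (rule less.IH[OF lt mv1' arg_cong[where f=card, OF O1]])
    have P1: "profile V A (P(i := R1))" by (rule profile_upd[OF P i L1])
    have st: "F ((P(i := R1))(i := R')) = F (P(i := R1)) \<or> (s \<notin> F (P(i := R1)) \<and> y \<in> F (P(i := R1)) \<and> (s,y) \<in> R' \<and> F ((P(i := R1))(i := R')) = F (P(i := R1)) - {y} \<union> {s})"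
      by (rule one_step[OF CR SPP SPO P1 i L' s yA(1) yA(2)[symmetric]])
        (auto simp: R1_def yA s)
    have eq: "(P(i := R1))(i := R') = P(i := R')" by simp
    have R1R': "(s,x) \<in> R1 \<Longrightarrow> (s,x) \<in> R'" for x unfolding R1_def using yA by (auto split: if_splits)
    obtain W1 where W1: "W1 = F (P(i := R1))" by simp
    obtain WQ where WQ: "WQ = F (P(i := R'))" by simp
    obtain W where W: "W = F P" by simp
    have IH': "W1 = W \<or> (s \<notin> W \<and> (\<exists>x\<in>W. W1 = W - {x} \<union> {s} \<and> (x,s) \<in> P i \<and> (s,x) \<in> R1))"
      using IH unfolding W1 W .
    have st': "WQ = W1 \<or> (s \<notin> W1 \<and> y \<in> W1 \<and> (s,y) \<in> R' \<and> WQ = W1 - {y} \<union> {s})"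
      using st unfolding eq W1 WQ .
    have "WQ = W \<or> (s \<notin> W \<and> (\<exists>x\<in>W. WQ = W - {x} \<union> {s} \<and> (x,s) \<in> P i \<and> (s,x) \<in> R'))"
      using IH' st' R1R' yA(3) unfolding R_def by blast
    then show ?thesis unfolding W WQ .
  qed
qed

theorem lemma10:
  fixes V :: "'v set" and A :: "'a set" and F :: "('v \<Rightarrow> 'a rel) \<Rightarrow> 'a set"
  assumes "finite V" and "V \<noteq> {}" and "finite A"
    and "consular_rule V A F" and "SPP V A F" and "SPO V A F"
    and "profile V A P" and "F P = {a, b}"
    and "i \<in> V" and "s \<in> A" and "moves_up A s (P i) R'"
  shows "(s \<in> {a, b} \<longrightarrow> F (P(i := R')) = F P) \<and>
         (s \<notin> {a, b} \<longrightarrow>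
            F (P(i := R')) = F P \<or>
            (\<exists>x\<in>{a, b}. F (P(i := R')) = ({a, b} - {x}) \<union> {s} \<and>
                         (x, s) \<in> P i \<and> (s, x) \<in> R'))"
  using main_claim[OF assms(4,5,6,7,9,10,3) assms(11) refl] assms(8) by auto

end
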